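(* Let $X$ be a set. (i) For every log-scale $\ell$ on $X$ there exists a metric on $X$ associated with $\ell$. (ii) If $|x-y|$ is a metric on $X$, then the function $\ell(x,y)=-\lfloor \ln|x-y|\rfloor$ (with $\ell(x,x)=+\infty$) is a log-scale on $X$, and the metric $|\cdot|$ is associated with it.
   Context: A log-scale on a set $X$ is a function $\ell:X\times X\to\mathbb{R}\cup\{\infty\}$ such that (1) $\ell(x,y)=\ell(y,x)$ for all $x,y$; (2) $\ell(x,y)=+\infty$ if and only if $x=y$; (3) there is $\delta\ge 0$ with $\ell(x,z)\ge\min(\ell(x,y),\ell(y,z))-\delta$ for all $x,y,z\in X$. A metric $|\cdot|$ on $X$ is associated with the log-scale $\ell$ if there are constants $0<\alpha<1$ and $c>1$ such that $c^{-1}\alpha^{\ell(x,y)}\le|x-y|\le c\,\alpha^{\ell(x,y)}$ for all $x,y\in X$. *)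

theory Defs
  imports "HOL-Analysis.Analysis"
begin

definition metric_on :: "'a set \<Rightarrow> ('a \<Rightarrow> 'a \<Rightarrow> real) \<Rightarrow> bool" where
  "metric_on X d \<longleftrightarrow>
     (\<forall>x\<in>X. \<forall>y\<in>X. 0 \<le> d x y) \<and>
     (\<forall>x\<in>X. \<forall>y\<in>X. d x y = 0 \<longleftrightarrow> x = y) \<and>
     (\<forall>x\<in>X. \<forall>y\<in>X. d x y = d y x) \<and>
     (\<forall>x\<in>X. \<forall>y\<in>X. \<forall>z\<in>X. d x z \<le> d x y + d y z)"

text \<open>Log-scale: values in R \<union> {+\<infinity>}, represented in ereal with -\<infinity> excluded.\<close>
definition log_scale :: "'a set \<Rightarrow> ('a \<Rightarrow> 'a \<Rightarrow> ereal) \<Rightarrow> bool" where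
  "log_scale X l \<longleftrightarrow>
     (\<forall>x\<in>X. \<forall>y\<in>X. l x y \<noteq> -\<infinity>) \<and>
     (\<forall>x\<in>X. \<forall>y\<in>X. l x y = l y x) \<and>
     (\<forall>x\<in>X. \<forall>y\<in>X. l x y = \<infinity> \<longleftrightarrow> x = y) \<and>
     (\<exists>\<delta>::real. \<delta> \<ge> 0 \<and>
        (\<forall>x\<in>X. \<forall>y\<in>X. \<forall>z\<in>X. l x z \<ge> min (l x y) (l y z) - ereal \<delta>))"

text \<open>alpha to the power of an element of R \<union> {+\<infinity>}, with alpha^(+\<infinity>) = 0 (for 0 < alpha < 1).
  The value at -\<infinity> is irrelevant (log-scales never take it).\<close>
definition epow :: "real \<Rightarrow> ereal \<Rightarrow> real" where
  "epow \<alpha> e = (case e of ereal r \<Rightarrow> \<alpha> powr r | PInfty \<Rightarrow> 0 | MInfty \<Rightarrow> 0)"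

definition associated :: "'a set \<Rightarrow> ('a \<Rightarrow> 'a \<Rightarrow> real) \<Rightarrow> ('a \<Rightarrow> 'a \<Rightarrow> ereal) \<Rightarrow> bool" where
  "associated X d l \<longleftrightarrow>
     (\<exists>\<alpha> c::real. 0 < \<alpha> \<and> \<alpha> < 1 \<and> c > 1 \<and>
        (\<forall>x\<in>X. \<forall>y\<in>X. epow \<alpha> (l x y) / c \<le> d x y \<and> d x y \<le> c * epow \<alpha> (l x y)))"

end

theory Submission imports Defs begin

lemma frink:
  fixes r :: "'a \<Rightarrow> 'a \<Rightarrow> real" and K :: real
  assumes nn: "\<forall>x\<in>X. \<forall>y\<in>X. 0 \<le> r x y" and z: "\<forall>x\<in>X. r x x = 0"
    and q: "\<forall>x\<in>X. \<forall>y\<in>X. \<forall>z\<in>X. r x z \<le> K * max (r x y) (r y z)"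
    and K1: "1 \<le> K" and K2: "K * K \<le> 2"
  shows "(\<forall>i\<le>n. p i \<in> X) \<Longrightarrow> r (p 0) (p n) \<le> 2 * (\<Sum>i<n. r (p i) (p (Suc i)))"
proof (induction n arbitrary: p rule: less_induct)
  case (less n)
  show ?case
  proof (cases "n = 0")
    case True then show ?thesis using less.prems z by simp
  next
    case False
    define a where "a i = r (p i) (p (Suc i))" for i
    define S where "S = (\<Sum>i<n. a i)"
    have an: "0 \<le> a i" if "i < n" for i using nn less.prems that unfolding a_def by simp
    have S0: "0 \<le> S" unfolding S_def using an by (intro sum_nonneg) auto
    define M where "M = {m. m < n \<and> (\<Sum>i<m. a i) \<le> S/2}"
    have "0 \<in> M" using False S0 unfolding M_def by simp
    have fin: "finite M" unfolding M_def by simp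
    define m where "m = Max M"
    have mM: "m \<in> M" unfolding m_def using fin \<open>0 \<in> M\<close> by (intro Max_in) auto
    hence mn: "m < n" and hd: "(\<Sum>i<m. a i) \<le> S/2" unfolding M_def by auto
    have split: "S = (\<Sum>i<Suc m. a i) + (\<Sum>i\<in>{Suc m..<n}. a i)"
      unfolding S_def using mn
      by (metis Suc_leI lessThan_atLeast0 sum.atLeastLessThan_concat zero_le)
    have tail: "(\<Sum>i\<in>{Suc m..<n}. a i) \<le> S/2"
    proof (cases "Suc m < n")
      case True
      have "Suc m \<notin> M"
      proof
        assume "Suc m \<in> M" then have "Suc m \<le> m" unfolding m_def using fin by simp
        then show False by simp
      qed
      then have "(\<Sum>i<Suc m. a i) > S/2" using True unfolding M_def by auto
      then show ?thesis using split by linarith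
    next
      case False
      then have "{Suc m..<n} = {}" by auto
      then show ?thesis using S0 by simp
    qed
    have A: "r (p 0) (p m) \<le> S"
      using less.IH[OF mn, of p] less.prems mn hd unfolding a_def by auto
    define q' where "q' i = p (i + Suc m)" for i
    have "r (q' 0) (q' (n - Suc m)) \<le> 2 * (\<Sum>i<n - Suc m. r (q' i) (q' (Suc i)))"
      using less.IH[of "n - Suc m" q'] less.prems mn unfolding q'_def by auto
    moreover have "(\<Sum>i<n - Suc m. r (q' i) (q' (Suc i))) = (\<Sum>i\<in>{Suc m..<n}. a i)"
    proof -
      have "(\<Sum>i\<in>{Suc m..<n}. a i) = (\<Sum>i\<in>{0 + Suc m..<(n - Suc m) + Suc m}. a i)"
        using mn by simp
      also have "\<dots> = (\<Sum>i\<in>{0..<n - Suc m}. a (i + Suc m))"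
        by (rule sum.shift_bounds_nat_ivl)
      finally show ?thesis unfolding q'_def a_def by (simp add: lessThan_atLeast0)
    qed
    ultimately have B: "r (p (Suc m)) (p n) \<le> S" using tail mn unfolding q'_def by simp
    have am: "a m \<le> S" unfolding S_def using mn an
      by (intro member_le_sum) auto
    have X: "p 0 \<in> X" "p m \<in> X" "p (Suc m) \<in> X" "p n \<in> X" using less.prems mn by auto
    have "r (p m) (p n) \<le> K * max (r (p m) (p (Suc m))) (r (p (Suc m)) (p n))"
      using q X by blast
    also have "\<dots> \<le> K * S" using am B K1 unfolding a_def by simp
    finally have C: "r (p m) (p n) \<le> K * S" .
    have "r (p 0) (p n) \<le> K * max (r (p 0) (p m)) (r (p m) (p n))"
      using q X by blast
    also have "\<dots> \<le> K * max S (K * S)" using A C K1 by (intro mult_left_mono) auto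
    also have "\<dots> = K * (K * S)" using mult_right_mono[OF K1 S0] by (simp add: max_def)
    also have "\<dots> \<le> 2 * S" using K2 S0 by (simp add: mult.assoc[symmetric] mult_right_mono)
    finally show ?thesis unfolding S_def a_def .
  qed
qed

definition chains :: "'a set \<Rightarrow> ('a \<Rightarrow> 'a \<Rightarrow> real) \<Rightarrow> 'a \<Rightarrow> 'a \<Rightarrow> real set" where
  "chains X r x y = {(\<Sum>i<n. r (p i) (p (Suc i))) | p n. p 0 = x \<and> p n = y \<and> (\<forall>i\<le>n. p i \<in> X)}"

lemma chain_metric:
  fixes r :: "'a \<Rightarrow> 'a \<Rightarrow> real" and K :: real
  assumes nn: "\<forall>x\<in>X. \<forall>y\<in>X. 0 \<le> r x y" and z: "\<forall>x\<in>X. r x x = 0"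
    and pos: "\<forall>x\<in>X. \<forall>y\<in>X. x \<noteq> y \<longrightarrow> 0 < r x y"
    and sym: "\<forall>x\<in>X. \<forall>y\<in>X. r x y = r y x"
    and q: "\<forall>x\<in>X. \<forall>y\<in>X. \<forall>z\<in>X. r x z \<le> K * max (r x y) (r y z)"
    and K1: "1 \<le> K" and K2: "K * K \<le> 2"
  defines "d \<equiv> (\<lambda>x y. Inf (chains X r x y))"
  shows "metric_on X d \<and> (\<forall>x\<in>X. \<forall>y\<in>X. r x y / 2 \<le> d x y \<and> d x y \<le> r x y)"
proof -
  have lower: "r x y / 2 \<le> s" if hs: "s \<in> chains X r x y" for x y s
  proof -
    obtain p n where "s = (\<Sum>i<n. r (p i) (p (Suc i)))" "p 0 = x" "p n = y" "\<forall>i\<le>n. p i \<in> X"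
      using hs unfolding chains_def by blast
    then show ?thesis using frink[OF nn z q K1 K2, of n p] by simp
  qed
  have mem1: "r x y \<in> chains X r x y" if "x \<in> X" "y \<in> X" for x y
  proof -
    define p where "p i = (if i = 0 then x else y)" for i :: nat
    have "r x y = (\<Sum>i<1. r (p i) (p (Suc i)))" unfolding p_def by simp
    moreover have "p 0 = x" "p 1 = y" "\<forall>i\<le>1. p i \<in> X" using that unfolding p_def by auto
    ultimately show ?thesis unfolding chains_def by blast
  qed
  have bdd: "bdd_below (chains X r x y)" if "x \<in> X" "y \<in> X" for x y
  proof -
    have "\<forall>s\<in>chains X r x y. r x y / 2 \<le> s" using lower by blast
    then show ?thesis by (meson bdd_below_def)
  qed
  have ub: "d x y \<le> r x y" if "x \<in> X" "y \<in> X" for x y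
    unfolding d_def using cInf_lower[OF mem1[OF that] bdd[OF that]] .
  have lb: "r x y / 2 \<le> d x y" if "x \<in> X" "y \<in> X" for x y
    unfolding d_def using mem1[OF that] lower by (intro cInf_greatest) auto
  have rev: "s \<in> chains X r y x" if hs: "s \<in> chains X r x y" "x \<in> X" "y \<in> X" for x y s
  proof -
    obtain p n where s: "s = (\<Sum>i<n. r (p i) (p (Suc i)))" "p 0 = x" "p n = y" "\<forall>i\<le>n. p i \<in> X"
      using hs unfolding chains_def by blast
    define p' where "p' i = p (n - i)" for i
    have "(\<Sum>i<n. r (p' i) (p' (Suc i))) = (\<Sum>i<n. r (p (Suc (n - Suc i))) (p (n - Suc i)))"
      unfolding p'_def by (intro sum.cong refl) (simp add: Suc_diff_Suc)
    also have "\<dots> = (\<Sum>i<n. r (p (n - Suc i)) (p (Suc (n - Suc i))))"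
      using s(4) sym by (intro sum.cong refl) auto
    also have "\<dots> = s" unfolding s(1) by (rule sum.nat_diff_reindex)
    finally have "s = (\<Sum>i<n. r (p' i) (p' (Suc i)))" by simp
    moreover have "p' 0 = y" "p' n = x" "\<forall>i\<le>n. p' i \<in> X" using s unfolding p'_def by auto
    ultimately show ?thesis unfolding chains_def by blast
  qed
  have symd: "d x y = d y x" if "x \<in> X" "y \<in> X" for x y
  proof -
    have "chains X r x y = chains X r y x" using rev that by blast
    then show ?thesis unfolding d_def by simp
  qed
  have cat: "s1 + s2 \<in> chains X r x z" if hs: "s1 \<in> chains X r x y" "s2 \<in> chains X r y z" for x y z s1 s2
  proof -
    obtain p n where s: "s1 = (\<Sum>i<n. r (p i) (p (Suc i)))" "p 0 = x" "p n = y" "\<forall>i\<le>n. p i \<in> X"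
      using hs unfolding chains_def by blast
    obtain p2 n2 where s2: "s2 = (\<Sum>i<n2. r (p2 i) (p2 (Suc i)))" "p2 0 = y" "p2 n2 = z" "\<forall>i\<le>n2. p2 i \<in> X"
      using hs unfolding chains_def by blast
    define c where "c i = (if i \<le> n then p i else p2 (i - n))" for i
    have "(\<Sum>i<n + n2. r (c i) (c (Suc i))) = (\<Sum>i\<in>{0..<n}. r (c i) (c (Suc i))) + (\<Sum>i\<in>{n..<n2+n}. r (c i) (c (Suc i)))"
      by (simp add: lessThan_atLeast0 sum.atLeastLessThan_concat add.commute)
    also have "(\<Sum>i\<in>{0..<n}. r (c i) (c (Suc i))) = s1"
      unfolding s(1) lessThan_atLeast0 c_def by (intro sum.cong refl) auto
    also have "(\<Sum>i\<in>{n..<n2+n}. r (c i) (c (Suc i))) = (\<Sum>i\<in>{0+n..<n2+n}. r (c i) (c (Suc i)))" by simp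
    also have "\<dots> = (\<Sum>i\<in>{0..<n2}. r (c (i+n)) (c (Suc (i+n))))" by (rule sum.shift_bounds_nat_ivl)
    also have "\<dots> = s2"
      unfolding s2(1) lessThan_atLeast0 c_def using s(3) s2(2) by (intro sum.cong refl) auto
    finally have "s1 + s2 = (\<Sum>i<n + n2. r (c i) (c (Suc i)))" by simp
    moreover have "c 0 = x" "c (n + n2) = z" "\<forall>i\<le>n+n2. c i \<in> X"
      using s s2 unfolding c_def by auto
    ultimately show ?thesis unfolding chains_def by blast
  qed
  have tri: "d x z \<le> d x y + d y z" if "x \<in> X" "y \<in> X" "z \<in> X" for x y z
  proof -
    have ne: "chains X r a b \<noteq> {}" if "a \<in> X" "b \<in> X" for a b using mem1[OF that] by blast
    have "d x z - s2 \<le> d x y" if s2: "s2 \<in> chains X r y z" for s2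
    proof -
      have "d x z - s2 \<le> s1" if "s1 \<in> chains X r x y" for s1
        using cInf_lower[OF cat[OF that s2] bdd[of x z]] \<open>x \<in> X\<close> \<open>z \<in> X\<close> unfolding d_def by simp
      then show ?thesis unfolding d_def using ne[of x y] \<open>x \<in> X\<close> \<open>y \<in> X\<close>
        by (intro cInf_greatest) auto
    qed
    then have "d x z - d x y \<le> s2" if "s2 \<in> chains X r y z" for s2 using that by force
    then have "d x z - d x y \<le> d y z" unfolding d_def using ne[of y z] \<open>y \<in> X\<close> \<open>z \<in> X\<close>
      by (intro cInf_greatest) auto
    then show ?thesis by simp
  qed
  have zero: "d x y = 0 \<longleftrightarrow> x = y" if "x \<in> X" "y \<in> X" for x y
  proof
    assume "d x y = 0"
    then have "r x y \<le> 0" using lb[OF that] by simp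
    then show "x = y" using pos that by force
  next
    assume "x = y" then show "d x y = 0" using ub[OF that] lb[OF that] z that by force
  qed
  have nnd: "0 \<le> d x y" if "x \<in> X" "y \<in> X" for x y using lb[OF that] nn that by force
  show ?thesis unfolding metric_on_def using nnd zero symd tri ub lb by blast
qed

lemma part1:
  assumes ls: "log_scale X l"
  shows "\<exists>d. metric_on X d \<and> associated X d l"
proof -
  note L = ls[unfolded log_scale_def]
  note nmi = conjunct1[OF L]
  note lsym = conjunct1[OF conjunct2[OF L]]
  note linf = conjunct1[OF conjunct2[OF conjunct2[OF L]]]
  note ex = conjunct2[OF conjunct2[OF conjunct2[OF L]]]
  from ex obtain \<delta> :: real where dd: "\<delta> \<ge> 0 \<and>
        (\<forall>x\<in>X. \<forall>y\<in>X. \<forall>z\<in>X. l x z \<ge> min (l x y) (l y z) - ereal \<delta>)"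
    by (rule exE)
  note d0 = conjunct1[OF dd]
  note dl = conjunct2[OF dd]
  define D where "D = \<delta> + 1"
  have D1: "D \<ge> 1" using d0 unfolding D_def by simp
  define \<alpha> :: real where "\<alpha> = 2 powr (-1 / (2 * D))"
  have a0: "0 < \<alpha>" unfolding \<alpha>_def by simp
  have a1: "\<alpha> < 1" unfolding \<alpha>_def using D1 by (simp add: powr_less_one)
  define K where "K = \<alpha> powr (- D)"
  have e: "(-1 / (2 * D)) * (- D) = 1/2" using D1 by (simp add: field_simps)
  have K: "K = 2 powr (1/2)" unfolding K_def \<alpha>_def powr_powr e ..
  have KK: "K * K = 2" unfolding K using powr_add[of "2::real" "1/2" "1/2", symmetric] by simp
  have K1: "1 \<le> K" unfolding K by (rule ge_one_powr_ge_zero) auto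
  define r where "r x y = epow \<alpha> (l x y)" for x y
  have rxx: "r x x = 0" if "x \<in> X" for x
  proof -
    have "l x x = \<infinity>" using linf that by blast
    then show ?thesis unfolding r_def epow_def by simp
  qed
  have rreal: "\<exists>t. l x y = ereal t \<and> r x y = \<alpha> powr t" if hs: "x \<in> X" "y \<in> X" "x \<noteq> y" for x y
  proof -
    obtain t where "l x y = ereal t" using nmi linf hs by (cases "l x y") auto
    then show ?thesis unfolding r_def epow_def by simp
  qed
  have rpos: "\<forall>x\<in>X. \<forall>y\<in>X. x \<noteq> y \<longrightarrow> 0 < r x y" 
  proof (intro ballI impI)
    fix x y assume "x \<in> X" "y \<in> X" "x \<noteq> y"
    then obtain t where "r x y = \<alpha> powr t" using rreal by blast
    then show "0 < r x y" using a0 by simp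
  qed
  have rnn: "\<forall>x\<in>X. \<forall>y\<in>X. 0 \<le> r x y" 
  proof (intro ballI)
    fix x y assume "x \<in> X" "y \<in> X"
    then show "0 \<le> r x y" using rpos rxx by (cases "x = y") (auto intro: less_imp_le)
  qed
  have rsym: "\<forall>x\<in>X. \<forall>y\<in>X. r x y = r y x" using lsym unfolding r_def by simp
  have rq: "\<forall>x\<in>X. \<forall>y\<in>X. \<forall>z\<in>X. r x z \<le> K * max (r x y) (r y z)"
  proof (intro ballI)
    fix x y z assume X: "x \<in> X" "y \<in> X" "z \<in> X"
    show "r x z \<le> K * max (r x y) (r y z)"
    proof (cases "x = z \<or> x = y \<or> y = z")
      case True
      then show ?thesis
      proof (elim disjE)
        assume "x = z" then show ?thesis using rxx X rnn K1 by (simp add: max_def)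
      next
        assume "x = y"
        have "r y z \<le> K * r y z" using mult_right_mono[OF K1, of "r y z"] rnn X by simp
        also have "\<dots> \<le> K * max (r x y) (r y z)" using K1 by (intro mult_left_mono) auto
        finally show ?thesis using \<open>x = y\<close> by simp
      next
        assume "y = z"
        have "r x y \<le> K * r x y" using mult_right_mono[OF K1, of "r x y"] rnn X by simp
        also have "\<dots> \<le> K * max (r x y) (r y z)" using K1 by (intro mult_left_mono) auto
        finally show ?thesis using \<open>y = z\<close> by simp
      qed
    next
      case False
      obtain a where a: "l x y = ereal a" "r x y = \<alpha> powr a" using rreal X False by blast
      obtain b where b: "l y z = ereal b" "r y z = \<alpha> powr b" using rreal X False by blast
      obtain c where c: "l x z = ereal c" "r x z = \<alpha> powr c" using rreal X False by blast
      have "ereal c \<ge> min (ereal a) (ereal b) - ereal \<delta>" using dl X unfolding a(1)[symmetric] b(1)[symmetric] c(1)[symmetric] by blast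
      then have "c \<ge> min a b - \<delta>" by (simp add: min_def split: if_splits)
      then have cD: "min a b - D \<le> c" unfolding D_def by simp
      have "\<alpha> powr c \<le> \<alpha> powr (min a b - D)" using cD a0 a1 by (intro powr_mono') auto
      also have "\<dots> = \<alpha> powr (min a b) * K" unfolding K_def by (simp add: powr_add[symmetric])
      also have "\<alpha> powr (min a b) = max (\<alpha> powr a) (\<alpha> powr b)"
        using a0 a1 powr_mono'[of a b \<alpha>] powr_mono'[of b a \<alpha>] by (auto simp: min_def max_def)
      finally show ?thesis using a b c by (simp add: mult.commute)
    qed
  qed
  define d where "d \<equiv> (\<lambda>x y. Inf (chains X r x y))"
  have cm: "metric_on X d \<and> (\<forall>x\<in>X. \<forall>y\<in>X. r x y / 2 \<le> d x y \<and> d x y \<le> r x y)"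
    unfolding d_def using chain_metric[OF rnn _ rpos rsym rq K1] rxx KK by simp
  have "\<forall>x\<in>X. \<forall>y\<in>X. epow \<alpha> (l x y) / 2 \<le> d x y \<and> d x y \<le> 2 * epow \<alpha> (l x y)"
  proof (intro ballI)
    fix x y assume "x \<in> X" "y \<in> X"
    then have "r x y / 2 \<le> d x y" "d x y \<le> r x y" "0 \<le> r x y" using cm rnn by auto
    then show "epow \<alpha> (l x y) / 2 \<le> d x y \<and> d x y \<le> 2 * epow \<alpha> (l x y)"
      unfolding r_def by auto
  qed
  then have "associated X d l" unfolding associated_def using a0 a1 by (intro exI[of _ \<alpha>] exI[of _ "2::real"]) auto
  then show ?thesis using cm by blast
qed

lemma floor_step:
  fixes a b c :: real
  assumes "0 < a" "0 < b" "0 < c" "c \<le> a + b"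
  shows "- real_of_int \<lfloor>ln c\<rfloor> \<ge> min (- real_of_int \<lfloor>ln a\<rfloor>) (- real_of_int \<lfloor>ln b\<rfloor>) - 1"
proof -
  have "c \<le> 2 * max a b" using assms by linarith
  then have "ln c \<le> ln (2 * max a b)" using assms by (subst ln_le_cancel_iff) auto
  also have "\<dots> = ln 2 + max (ln a) (ln b)" using assms by (simp add: ln_mult max_def)
  also have "ln (2::real) \<le> 1" using ln_le_minus_one[of "2::real"] by simp
  finally have "ln c \<le> max (ln a) (ln b) + 1" by linarith
  then have "\<lfloor>ln c\<rfloor> \<le> \<lfloor>max (ln a) (ln b) + 1\<rfloor>" by (rule floor_mono)
  also have "\<dots> = max \<lfloor>ln a\<rfloor> \<lfloor>ln b\<rfloor> + 1"
  proof (cases "ln a \<le> ln b")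
    case True
    then have "\<lfloor>ln a\<rfloor> \<le> \<lfloor>ln b\<rfloor>" by (rule floor_mono)
    then show ?thesis using True by (simp add: max_def)
  next
    case False
    then have "\<lfloor>ln b\<rfloor> \<le> \<lfloor>ln a\<rfloor>" by (intro floor_mono) simp
    then show ?thesis using False by (simp add: max_def)
  qed
  finally have I: "\<lfloor>ln c\<rfloor> \<le> max \<lfloor>ln a\<rfloor> \<lfloor>ln b\<rfloor> + 1" .
  then have "real_of_int \<lfloor>ln c\<rfloor> \<le> real_of_int (max \<lfloor>ln a\<rfloor> \<lfloor>ln b\<rfloor> + 1)"
    by (simp only: of_int_le_iff)
  then have "real_of_int \<lfloor>ln c\<rfloor> \<le> max (real_of_int \<lfloor>ln a\<rfloor>) (real_of_int \<lfloor>ln b\<rfloor>) + 1"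
    by simp
  then show ?thesis by (simp add: max_def min_def split: if_splits)
qed

lemma part2:
  assumes m: "metric_on X d"
  shows "log_scale X (\<lambda>x y. if x = y then \<infinity> else ereal (- of_int \<lfloor>ln (d x y)\<rfloor>)) \<and>
         associated X d (\<lambda>x y. if x = y then \<infinity> else ereal (- of_int \<lfloor>ln (d x y)\<rfloor>))"
    (is "log_scale X ?l \<and> associated X d ?l")
proof -
  note M = m[unfolded metric_on_def]
  note dnn = conjunct1[OF M]
  note d0 = conjunct1[OF conjunct2[OF M]]
  note dsym = conjunct1[OF conjunct2[OF conjunct2[OF M]]]
  note dtri = conjunct2[OF conjunct2[OF conjunct2[OF M]]]
  have dpos: "0 < d x y" if hs: "x \<in> X" "y \<in> X" "x \<noteq> y" for x y
  proof -
    have "0 \<le> d x y" "d x y \<noteq> 0" using dnn d0 hs by auto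
    then show ?thesis by simp
  qed
  have q: "?l x z \<ge> min (?l x y) (?l y z) - ereal 1" if X: "x \<in> X" "y \<in> X" "z \<in> X" for x y z
  proof (cases "x = z")
    case True then show ?thesis by simp
  next
    case xz: False
    show ?thesis
    proof (cases "x = y")
      case True
      have "min (?l x y) (?l y z) - ereal 1 \<le> min (?l x y) (?l y z)" by (cases "min (?l x y) (?l y z)") auto
      also have "\<dots> \<le> ?l y z" by simp
      finally show ?thesis using True by simp
    next
      case xy: False
      show ?thesis
      proof (cases "y = z")
        case True
        have "min (?l x y) (?l y z) - ereal 1 \<le> min (?l x y) (?l y z)" by (cases "min (?l x y) (?l y z)") auto
        also have "\<dots> \<le> ?l x y" by simp
        finally show ?thesis using True by simp
      next
        case yz: False
        have "- real_of_int \<lfloor>ln (d x z)\<rfloor> \<ge> min (- real_of_int \<lfloor>ln (d x y)\<rfloor>) (- real_of_int \<lfloor>ln (d y z)\<rfloor>) - 1"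
          using floor_step[of "d x y" "d y z" "d x z"] dpos dtri X xy yz xz by auto
        then show ?thesis using xy yz xz by (simp add: min_def split: if_splits)
      qed
    qed
  qed
  have ls1: "\<forall>x\<in>X. \<forall>y\<in>X. ?l x y \<noteq> -\<infinity>" by simp
  have ls2: "\<forall>x\<in>X. \<forall>y\<in>X. ?l x y = ?l y x"
  proof (intro ballI)
    fix x y assume "x \<in> X" "y \<in> X"
    then have "d x y = d y x" using dsym by blast
    then show "?l x y = ?l y x" by simp
  qed
  have ls3: "\<forall>x\<in>X. \<forall>y\<in>X. ?l x y = \<infinity> \<longleftrightarrow> x = y" by simp
  have ls4: "\<exists>\<delta>::real. \<delta> \<ge> 0 \<and> (\<forall>x\<in>X. \<forall>y\<in>X. \<forall>z\<in>X. ?l x z \<ge> min (?l x y) (?l y z) - ereal \<delta>)"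
  proof (intro exI[of _ "1::real"] conjI)
    show "(0::real) \<le> 1" by simp
    show "\<forall>x\<in>X. \<forall>y\<in>X. \<forall>z\<in>X. ?l x z \<ge> min (?l x y) (?l y z) - ereal 1"
      using q by blast
  qed
  have ls: "log_scale X ?l" unfolding log_scale_def using ls1 ls2 ls3 ls4 by blast
  define \<alpha> :: real where "\<alpha> = exp (-1)"
  have a0: "0 < \<alpha>" and a1: "\<alpha> < 1" unfolding \<alpha>_def by auto
  have b: "epow \<alpha> (?l x y) / 3 \<le> d x y \<and> d x y \<le> 3 * epow \<alpha> (?l x y)"
    if X: "x \<in> X" "y \<in> X" for x y
  proof (cases "x = y")
    case True
    then have "d x y = 0" using d0 X by blast
    then show ?thesis using True by (simp add: epow_def)
  next
    case False
    define t where "t = ln (d x y)"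
    have dp: "0 < d x y" using dpos X False by blast
    have dt: "d x y = exp t" unfolding t_def using dp by simp
    have ep: "epow \<alpha> (?l x y) = exp (real_of_int \<lfloor>t\<rfloor>)"
      using False unfolding epow_def \<alpha>_def t_def by (simp add: powr_def)
    have "exp (real_of_int \<lfloor>t\<rfloor>) \<le> exp t" by simp
    moreover have "exp t \<le> exp (real_of_int \<lfloor>t\<rfloor> + 1)" by simp
    moreover have "exp (real_of_int \<lfloor>t\<rfloor> + 1) \<le> 3 * exp (real_of_int \<lfloor>t\<rfloor>)"
      using exp_le by (simp add: exp_add mult.commute)
    moreover have "0 < exp (real_of_int \<lfloor>t\<rfloor>)" by simp
    ultimately show ?thesis unfolding ep using dt by linarith
  qed
  have "associated X d ?l" unfolding associated_def
    using a0 a1 b by (intro exI[of _ \<alpha>] exI[of _ "3::real"]) auto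
  then show ?thesis using ls by blast
qed

theorem proposition1p1p3:
  fixes X :: "'a set"
  shows "(\<forall>l. log_scale X l \<longrightarrow> (\<exists>d. metric_on X d \<and> associated X d l)) \<and>
         (\<forall>d. metric_on X d \<longrightarrow>
            (let l = (\<lambda>x y. if x = y then \<infinity> else ereal (- of_int \<lfloor>ln (d x y)\<rfloor>))
             in log_scale X l \<and> associated X d l))"
  using part1 part2 unfolding Let_def by blast

end
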